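(* Let $L$ be an operator of order $n>0$ in normal form in $A_1(\mathbf{C})$, and consider its test-filtration $\delta_{p,q}$. Assume that the symbol $\sigma(L)\in\mathbf{C}[\chi,\xi]$ is a power of an irreducible polynomial $g\in\mathbf{C}[\chi,\xi]$. Then for every nonzero $M$ in the centralizer $\mathcal{C}(L)=\{M\in A_1(\mathbf{C}):[L,M]=0\}$, the symbol $\sigma(M)$ is (a nonzero constant multiple of) a power of $g$.
   Context: $A_1(\mathbf{C})$ is the first Weyl algebra of operators $P=\sum a_{ij}x^i\partial^j$, $[\partial,x]=1$; normal form means $P=\partial^n+u_{n-2}\partial^{n-2}+\dots+u_0$. Newton diagram $\mathcal{N}(P)=\{(i,j):a_{ij}\neq0\}$. For nonnegative integers $p,q$, $p+q>0$, $\Lambda_{p,q}(i,j)=pi+qj$, $\delta_{p,q}(P)=\max_{(i,j)\in\mathcal{N}(P)}\Lambda_{p,q}(i,j)$, and the symbol of $P$ is the polynomial $\sigma(P)=\sum_{\Lambda_{p,q}(i,j)=\delta_{p,q}(P)}a_{ij}\chi^i\xi^j\in\mathbf{C}[\chi,\xi]$. The test-filtration for $L\neq\partial^n$ is the $\delta_{p,q}$ for the (up to scaling unique) linear form with $\delta_{p,q}(L)=\Lambda_{p,q}(0,n)=\Lambda_{p,q}(a,b)$ for some $(a,b)\in\mathcal{N}(L)\setminus\{(0,n)\}$. *)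

theory Defs
  imports "HOL-Computational_Algebra.Polynomial_Factorial"
begin

text \<open>An element of the first Weyl algebra A_1(C) is represented by its
coefficient function: P = sum a(i,j) x^i d^j (normally ordered, x to the left),
with a(i,j) = P (i,j); elements are required to have finite support.\<close>

type_synonym weyl = "nat \<times> nat \<Rightarrow> complex"

definition newton :: "weyl \<Rightarrow> (nat \<times> nat) set" where
  "newton P = {ij. P ij \<noteq> 0}"

definition is_weyl :: "weyl \<Rightarrow> bool" where
  "is_weyl P \<longleftrightarrow> finite (newton P)"

text \<open>Product in A_1 using  d^j x^k = sum_t C(j,t) C(k,t) t! x^(k-t) d^(j-t).\<close>
definition weyl_mult :: "weyl \<Rightarrow> weyl \<Rightarrow> weyl" where
  "weyl_mult P Q = (\<lambda>(a, b).
     \<Sum>(i, j)\<in>newton P. \<Sum>(k, l)\<in>newton Q. \<Sum>t\<in>{..min j k}.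
       (if i + k - t = a \<and> j + l - t = b
        then P (i, j) * Q (k, l) * of_nat ((j choose t) * (k choose t) * fact t)
        else 0))"

definition dpow :: "nat \<Rightarrow> weyl" where
  "dpow n = (\<lambda>ij. if ij = (0, n) then 1 else 0)"

text \<open>Normal form of order n: P = d^n + u_(n-2) d^(n-2) + ... + u_0, u_k in C[x].\<close>
definition normal_form :: "nat \<Rightarrow> weyl \<Rightarrow> bool" where
  "normal_form n P \<longleftrightarrow> is_weyl P \<and> P (0, n) = 1 \<and>
     (\<forall>i j. (j > n \<or> (j = n \<and> i > 0) \<or> Suc j = n) \<longrightarrow> P (i, j) = 0)"

definition Lam :: "nat \<Rightarrow> nat \<Rightarrow> nat \<times> nat \<Rightarrow> nat" where
  "Lam p q ij = p * fst ij + q * snd ij"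

definition delta :: "nat \<Rightarrow> nat \<Rightarrow> weyl \<Rightarrow> nat" where
  "delta p q P = Max (Lam p q ` newton P)"

definition test_filtration :: "nat \<Rightarrow> weyl \<Rightarrow> nat \<Rightarrow> nat \<Rightarrow> bool" where
  "test_filtration n L p q \<longleftrightarrow> p + q > 0 \<and>
     delta p q L = Lam p q (0, n) \<and>
     (\<exists>ab \<in> newton L - {(0, n)}. Lam p q ab = delta p q L)"

text \<open>Bivariate polynomials C[chi, xi] are represented as complex poly poly:
outer variable xi, inner variable chi.\<close>
definition symbol :: "nat \<Rightarrow> nat \<Rightarrow> weyl \<Rightarrow> complex poly poly" where
  "symbol p q P = (\<Sum>(i, j)\<in>{ij \<in> newton P. Lam p q ij = delta p q P}.
       monom (monom (P (i, j)) i) j)"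

definition centralizer :: "weyl \<Rightarrow> weyl set" where
  "centralizer L = {M. is_weyl M \<and> weyl_mult L M = weyl_mult M L}"

end

theory Submission
  imports Defs "HOL-Computational_Algebra.Fundamental_Theorem_Algebra" "HOL-Computational_Algebra.Field_as_Ring"
begin


lemma inner_sum:
  fixes c :: complex
  assumes pq: "p + q > 0"
    and w: "p*a + q*b + (p+q) \<ge> p*i + q*j + (p*k + q*l)"
  shows "(\<Sum>t\<in>{..min j k}. (if i + k - t = a \<and> j + l - t = b
        then c * of_nat ((j choose t) * (k choose t) * fact t) else 0))
   = (if i+k=a \<and> j+l=b then c else 0) + (if i+k=Suc a \<and> j+l=Suc b then c * of_nat (j*k) else 0)"
proof -
  define F where "F t = (if i + k - t = a \<and> j + l - t = b
        then c * of_nat ((j choose t) * (k choose t) * fact t) else (0::complex))" for t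
  have z: "F t = 0" if "t \<in> {..min j k} - {..1}" for t
  proof (rule ccontr)
    assume "F t \<noteq> 0"
    hence e: "i + k - t = a" "j + l - t = b" unfolding F_def by (auto split: if_splits)
    from that have t: "t \<le> j" "t \<le> k" "t \<ge> 2" by auto
    hence "i + k = a + t" "j + l = b + t" using e by auto
    hence "p*i + q*j + (p*k + q*l) = p*a + q*b + (p+q)*t"
    proof -
      assume h: "i + k = a + t" "j + l = b + t"
      have "p*i + q*j + (p*k + q*l) = p*(i+k) + q*(j+l)" by (simp add: algebra_simps)
      also have "\<dots> = p*(a+t)+q*(b+t)" using h by simp
      also have "\<dots> = p*a+q*b+(p+q)*t" by (simp add: algebra_simps)
      finally show ?thesis .
    qed
    with w have "(p+q)*t \<le> (p+q)*1" by simp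
    with pq have "t \<le> 1" by simp
    with t show False by simp
  qed
  have "(\<Sum>t\<in>{..min j k}. F t) = (\<Sum>t\<in>{..min j k} \<inter> {..1}. F t)"
    by (rule sum.mono_neutral_right) (use z in auto)
  also have "\<dots> = (if i+k=a \<and> j+l=b then c else 0) + (if i+k=Suc a \<and> j+l=Suc b then c * of_nat (j*k) else 0)"
  proof (cases "min j k = 0")
    case True
    hence "{..min j k} \<inter> {..1} = {0}" by auto
    thus ?thesis using True by (auto simp: F_def)
  next
    case False
    hence "{..min j k} \<inter> {..1} = {0,1}" by auto
    hence "(\<Sum>t\<in>{..min j k} \<inter> {..1}. F t) = F 0 + F 1" by simp
    moreover have "F 0 = (if i+k=a \<and> j+l=b then c else 0)" by (simp add: F_def)
    moreover have "F 1 = (if i+k=Suc a \<and> j+l=Suc b then c * of_nat (j*k) else 0)"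
      using False unfolding F_def by auto
    ultimately show ?thesis by simp
  qed
  finally show ?thesis unfolding F_def .
qed

lemma Lam_le_delta: "is_weyl P \<Longrightarrow> ij \<in> newton P \<Longrightarrow> Lam p q ij \<le> delta p q P"
  unfolding delta_def is_weyl_def by (rule Max_ge) auto

lemma wsum: "i+k = Suc a \<Longrightarrow> j+l = Suc b \<Longrightarrow> p*i+q*j+(p*k+q*l) = p*a+q*b+(p+q::nat)"
proof -
  assume h: "i+k = Suc a" "j+l = Suc b"
  have "p*i + q*j + (p*k + q*l) = p*(i+k) + q*(j+l)" by (simp add: algebra_simps)
  also have "\<dots> = p*(Suc a)+q*(Suc b)" using h by simp
  also have "\<dots> = p*a+q*b+(p+q)" by (simp add: algebra_simps)
  finally show ?thesis .
qed

lemma wm_top: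
  assumes wP: "is_weyl P" and wQ: "is_weyl Q" and pq: "p+q>0"
    and ab: "Lam p q (a,b) + (p+q) = delta p q P + delta p q Q"
  shows "weyl_mult P Q (a,b) = (\<Sum>(i,j)\<in>newton P. \<Sum>(k,l)\<in>newton Q.
     (if i+k=a \<and> j+l=b then P(i,j)*Q(k,l) else 0) +
     (if i+k=Suc a \<and> j+l=Suc b then P(i,j)*Q(k,l) * of_nat (j*k) else 0))"
  unfolding weyl_mult_def split
proof (rule sum.cong[OF refl], clarify, rule sum.cong[OF refl], clarify)
  fix i j k l assume ij: "(i,j) \<in> newton P" and kl: "(k,l) \<in> newton Q"
  have "Lam p q (i,j) \<le> delta p q P" by (rule Lam_le_delta[OF wP ij])
  moreover have "Lam p q (k,l) \<le> delta p q Q" by (rule Lam_le_delta[OF wQ kl])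
  ultimately have w: "p*a + q*b + (p+q) \<ge> p*i + q*j + (p*k + q*l)" using ab by (simp add: Lam_def)
  show "(\<Sum>t\<in>{..min j k}. if i + k - t = a \<and> j + l - t = b
        then P (i, j) * Q (k, l) * of_nat ((j choose t) * (k choose t) * fact t) else 0) =
    (if i+k=a \<and> j+l=b then P(i,j)*Q(k,l) else 0) +
     (if i+k=Suc a \<and> j+l=Suc b then P(i,j)*Q(k,l) * of_nat (j*k) else 0)"
    by (rule inner_sum[OF pq w])
qed

definition Tp :: "nat \<Rightarrow> nat \<Rightarrow> weyl \<Rightarrow> (nat \<times> nat) set" where
  "Tp p q P = {ij \<in> newton P. Lam p q ij = delta p q P}"

lemma restrictT:
  assumes wP: "is_weyl P" and wQ: "is_weyl Q"
    and ab: "Lam p q (a,b) + (p+q) = delta p q P + delta p q Q"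
  shows "(\<Sum>(i,j)\<in>newton P. \<Sum>(k,l)\<in>newton Q.
     (if i+k=Suc a \<and> j+l=Suc b then P(i,j)*Q(k,l) * of_nat (w i j k l) else 0)) =
     (\<Sum>(i,j)\<in>Tp p q P. \<Sum>(k,l)\<in>Tp p q Q.
     (if i+k=Suc a \<and> j+l=Suc b then P(i,j)*Q(k,l) * of_nat (w i j k l) else (0::complex)))"
proof -
  have fP: "finite (newton P)" and fQ: "finite (newton Q)" using wP wQ by (auto simp: is_weyl_def)
  have key: "(i,j) \<in> Tp p q P \<and> (k,l) \<in> Tp p q Q"
    if "(i,j) \<in> newton P" "(k,l) \<in> newton Q" "i+k=Suc a" "j+l=Suc b" for i j k l
  proof -
    have "Lam p q (i,j) \<le> delta p q P" by (rule Lam_le_delta[OF wP that(1)])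
    moreover have "Lam p q (k,l) \<le> delta p q Q" by (rule Lam_le_delta[OF wQ that(2)])
    moreover have "Lam p q (i,j) + Lam p q (k,l) = Lam p q (a,b) + (p+q)"
      using wsum[OF that(3,4), of p q] by (simp add: Lam_def)
    ultimately show ?thesis using that ab by (auto simp: Tp_def)
  qed
  have "(\<Sum>(i,j)\<in>newton P. \<Sum>(k,l)\<in>newton Q.
     (if i+k=Suc a \<and> j+l=Suc b then P(i,j)*Q(k,l) * of_nat (w i j k l) else 0)) =
     (\<Sum>(i,j)\<in>Tp p q P. \<Sum>(k,l)\<in>newton Q.
     (if i+k=Suc a \<and> j+l=Suc b then P(i,j)*Q(k,l) * of_nat (w i j k l) else (0::complex)))"
    apply (rule sum.mono_neutral_right[OF fP])
      apply (auto simp: Tp_def)[1]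
     apply clarify
     apply (rule sum.neutral)
    using key apply auto
    done
  also have "\<dots> = (\<Sum>(i,j)\<in>Tp p q P. \<Sum>(k,l)\<in>Tp p q Q.
     (if i+k=Suc a \<and> j+l=Suc b then P(i,j)*Q(k,l) * of_nat (w i j k l) else (0::complex)))"
    apply (rule sum.cong[OF refl], clarify)
    apply (rule sum.mono_neutral_right[OF fQ])
     apply (auto simp: Tp_def)[1]
    using key by (auto simp: Tp_def split: if_splits)
  finally show ?thesis .
qed

lemma comm_top:
  assumes wL: "is_weyl L" and wM: "is_weyl M" and pq: "p+q>0"
    and comm: "weyl_mult L M = weyl_mult M L"
  shows "(\<Sum>(i,j)\<in>Tp p q L. \<Sum>(k,l)\<in>Tp p q M.
     (if i+k=Suc a \<and> j+l=Suc b then L(i,j)*M(k,l) * of_nat (j*k) else 0)) =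
     (\<Sum>(i,j)\<in>Tp p q L. \<Sum>(k,l)\<in>Tp p q M.
     (if i+k=Suc a \<and> j+l=Suc b then L(i,j)*M(k,l) * of_nat (i*l) else (0::complex)))"
proof (cases "Lam p q (a,b) + (p+q) = delta p q L + delta p q M")
  case True
  define A0 where "A0 i j k l = (if i+k=a \<and> j+l=b then L(i,j)*M(k,l) else (0::complex))" for i j k l
  define A1 where "A1 i j k l = (if i+k=Suc a \<and> j+l=Suc b then L(i,j)*M(k,l) * of_nat (j*k) else (0::complex))" for i j k l
  define B1 where "B1 i j k l = (if i+k=Suc a \<and> j+l=Suc b then L(i,j)*M(k,l) * of_nat (i*l) else (0::complex))" for i j k l
  have e1: "weyl_mult L M (a,b) = (\<Sum>(i,j)\<in>newton L. \<Sum>(k,l)\<in>newton M. A0 i j k l + A1 i j k l)"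
    unfolding A0_def A1_def by (rule wm_top[OF wL wM pq True])
  have True': "Lam p q (a,b) + (p+q) = delta p q M + delta p q L" using True by simp
  have "weyl_mult M L (a,b) = (\<Sum>(k,l)\<in>newton M. \<Sum>(i,j)\<in>newton L. A0 i j k l + B1 i j k l)"
    unfolding wm_top[OF wM wL pq True'] A0_def B1_def
    by (rule sum.cong[OF refl], clarify, rule sum.cong[OF refl], clarify) (auto simp: ac_simps)
  also have "\<dots> = (\<Sum>(i,j)\<in>newton L. \<Sum>(k,l)\<in>newton M. A0 i j k l + B1 i j k l)"
    unfolding split_def by (rule sum.swap)
  finally have e2: "weyl_mult M L (a,b) = (\<Sum>(i,j)\<in>newton L. \<Sum>(k,l)\<in>newton M. A0 i j k l + B1 i j k l)" .
  have "(\<Sum>(i,j)\<in>newton L. \<Sum>(k,l)\<in>newton M. A0 i j k l) + (\<Sum>(i,j)\<in>newton L. \<Sum>(k,l)\<in>newton M. A1 i j k l)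
     = (\<Sum>(i,j)\<in>newton L. \<Sum>(k,l)\<in>newton M. A0 i j k l) + (\<Sum>(i,j)\<in>newton L. \<Sum>(k,l)\<in>newton M. B1 i j k l)"
    using e1 e2 comm unfolding split_def by (simp add: sum.distrib)
  hence "(\<Sum>(i,j)\<in>newton L. \<Sum>(k,l)\<in>newton M. A1 i j k l) = (\<Sum>(i,j)\<in>newton L. \<Sum>(k,l)\<in>newton M. B1 i j k l)"
    by simp
  thus ?thesis unfolding A1_def B1_def restrictT[OF wL wM True] .
next
  case False
  have z: "(\<Sum>(i,j)\<in>Tp p q L. \<Sum>(k,l)\<in>Tp p q M.
     (if i+k=Suc a \<and> j+l=Suc b then L(i,j)*M(k,l) * of_nat (w i j k l) else 0)) = (0::complex)" for w
  proof (rule sum.neutral, clarify, rule sum.neutral, clarify)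
    fix i j k l assume "(i,j) \<in> Tp p q L" "(k,l) \<in> Tp p q M"
    hence "Lam p q (i,j) = delta p q L" "Lam p q (k,l) = delta p q M" by (auto simp: Tp_def)
    moreover have "i+k = Suc a \<Longrightarrow> j+l = Suc b \<Longrightarrow> Lam p q (i,j) + Lam p q (k,l) = Lam p q (a,b) + (p+q)"
      using wsum[of i k a j l b p q] by (simp add: Lam_def)
    ultimately show "(if i+k=Suc a \<and> j+l=Suc b then L(i,j)*M(k,l) * of_nat (w i j k l) else 0) = 0"
      using False by auto
  qed
  show ?thesis using z[of "\<lambda>i j k l. j*k"] z[of "\<lambda>i j k l. i*l"] by simp
qed




type_synonym pp = "complex poly poly"

definition Dc :: "pp \<Rightarrow> pp" where "Dc F = map_poly pderiv F"
definition cf :: "pp \<Rightarrow> nat \<Rightarrow> nat \<Rightarrow> complex" where "cf F i j = coeff (coeff F j) i"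
definition mon :: "complex \<Rightarrow> nat \<Rightarrow> nat \<Rightarrow> pp" where "mon c i j = monom (monom c i) j"
definition K :: "complex \<Rightarrow> pp" where "K c = [:[:c:]:]"

lemma Dc_coeff: "coeff (Dc F) n = pderiv (coeff F n)"
  unfolding Dc_def by (simp add: coeff_map_poly)

lemma pderiv_sum': "pderiv (sum f A) = (\<Sum>x\<in>A. pderiv (f x))"
  using higher_pderiv_sum[of 1 f A] by simp

lemma Dc_add: "Dc (F + G) = Dc F + Dc G"
  by (rule poly_eqI) (simp add: Dc_coeff pderiv_add)

lemma Dc_mult: "Dc (F * G) = Dc F * G + F * Dc G"
proof (rule poly_eqI)
  fix n
  have "coeff (Dc (F * G)) n = (\<Sum>i\<le>n. coeff F i * pderiv (coeff G (n-i)) + pderiv (coeff F i) * coeff G (n-i))"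
    by (simp add: Dc_coeff coeff_mult pderiv_sum' pderiv_mult mult.commute)
  also have "\<dots> = coeff (Dc F * G + F * Dc G) n"
    by (simp only: coeff_add coeff_mult Dc_coeff sum.distrib add.commute)
  finally show "coeff (Dc (F * G)) n = coeff (Dc F * G + F * Dc G) n" .
qed

lemma Dc_sum: "Dc (sum f A) = (\<Sum>x\<in>A. Dc (f x))"
  by (rule poly_eqI) (simp add: Dc_coeff coeff_sum pderiv_sum')

lemma cf_eqI: "(\<And>i j. cf F i j = cf G i j) \<Longrightarrow> F = G"
  unfolding cf_def by (intro poly_eqI) auto

lemma cf_add[simp]: "cf (F + G) i j = cf F i j + cf G i j"
  by (simp add: cf_def)
lemma cf_diff[simp]: "cf (F - G) i j = cf F i j - cf G i j"
  by (simp add: cf_def)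
lemma cf_sum: "cf (sum f A) i j = (\<Sum>x\<in>A. cf (f x) i j)"
  by (simp add: cf_def coeff_sum)
lemma cf_K[simp]: "cf (K c * F) i j = c * cf F i j"
  by (simp add: cf_def K_def)
lemma cf_mon[simp]: "cf (mon c a b) i j = (if a = i \<and> b = j then c else 0)"
  by (simp add: cf_def mon_def coeff_monom)

lemma mon_mult: "mon a i j * mon b k l = mon (a*b) (i+k) (j+l)"
  by (simp add: mon_def mult_monom)

lemma pderiv_mon: "pderiv (mon c i j) = mon (c * of_nat j) i (j - 1)"
proof -
  have "of_nat j * monom c i = monom (c * of_nat j) i"
    by (rule poly_eqI) (simp add: coeff_monom of_nat_poly)
  thus ?thesis by (simp add: mon_def pderiv_monom)
qed

lemma Dc_mon: "Dc (mon c i j) = mon (c * of_nat i) (i - 1) j"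
  by (rule poly_eqI) (auto simp: Dc_coeff mon_def coeff_monom pderiv_monom mult.commute)

definition Xp :: pp where "Xp = [:0, 1:]"
definition Yp :: pp where "Yp = [:[:0, 1:]:]"

lemma cf_Y_Dc: "cf (Yp * Dc F) i j = of_nat i * cf F i j"
  by (cases i) (simp_all add: cf_def Yp_def Dc_coeff coeff_pderiv)

lemma cf_X_pderiv: "cf (Xp * pderiv F) i j = of_nat j * cf F i j"
  by (cases j) (simp_all add: cf_def Xp_def coeff_pderiv of_nat_poly)

lemma symbol_Tp: "symbol p q P = (\<Sum>(i,j)\<in>Tp p q P. mon (P(i,j)) i j)"
  unfolding symbol_def Tp_def mon_def ..

lemma sym_cf: "is_weyl P \<Longrightarrow> cf (symbol p q P) i j = (if Lam p q (i,j) = delta p q P then P(i,j) else 0)"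
proof -
  assume w: "is_weyl P"
  have fin: "finite (Tp p q P)" using w by (auto simp: is_weyl_def Tp_def)
  have "cf (symbol p q P) i j = (\<Sum>x\<in>Tp p q P. if x = (i,j) then P x else 0)"
    unfolding symbol_Tp cf_sum by (rule sum.cong) (auto split: if_splits)
  also have "\<dots> = (if (i,j) \<in> Tp p q P then P (i,j) else 0)"
    using fin by (simp add: sum.delta)
  also have "\<dots> = (if Lam p q (i,j) = delta p q P then P(i,j) else 0)"
    by (auto simp: Tp_def newton_def)
  finally show ?thesis .
qed

lemma euler:
  assumes w: "is_weyl P"
  shows "K (of_nat p) * (Yp * Dc (symbol p q P)) + K (of_nat q) * (Xp * pderiv (symbol p q P))
       = K (of_nat (delta p q P)) * symbol p q P"
proof (rule cf_eqI)
  fix i j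
  show "cf (K (of_nat p) * (Yp * Dc (symbol p q P)) + K (of_nat q) * (Xp * pderiv (symbol p q P))) i j
       = cf (K (of_nat (delta p q P)) * symbol p q P) i j"
  proof (cases "Lam p q (i,j) = delta p q P")
    case True
    hence e: "of_nat (delta p q P) = (of_nat p * of_nat i + of_nat q * of_nat j :: complex)"
      by (simp add: Lam_def flip: True)
    show ?thesis unfolding cf_add cf_K cf_Y_Dc cf_X_pderiv e by (simp add: algebra_simps)
  next
    case False
    thus ?thesis unfolding cf_add cf_K cf_Y_Dc cf_X_pderiv using sym_cf[OF w] by simp
  qed
qed

lemma cf_prod_sum: "cf ((\<Sum>x\<in>A. f x) * (\<Sum>y\<in>B. g y)) a b = (\<Sum>x\<in>A. \<Sum>y\<in>B. cf (f x * g y) a b)"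
  by (simp add: sum_product cf_sum)

lemma pderiv_symbol: "pderiv (symbol p q P) = (\<Sum>(i,j)\<in>Tp p q P. mon (P(i,j) * of_nat j) i (j - 1))"
  unfolding symbol_Tp pderiv_sum' by (rule sum.cong) (auto simp: pderiv_mon)

lemma Dc_symbol: "Dc (symbol p q P) = (\<Sum>(i,j)\<in>Tp p q P. mon (P(i,j) * of_nat i) (i - 1) j)"
  unfolding symbol_Tp Dc_sum by (rule sum.cong) (auto simp: Dc_mon)

lemma J_coeff1: "cf (pderiv (symbol p q L) * Dc (symbol p q M)) a b =
  (\<Sum>(i,j)\<in>Tp p q L. \<Sum>(k,l)\<in>Tp p q M.
     (if i+k=Suc a \<and> j+l=Suc b then L(i,j)*M(k,l) * of_nat (j*k) else 0))"
  unfolding pderiv_symbol Dc_symbol cf_prod_sum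
  by (rule sum.cong[OF refl], clarify, rule sum.cong[OF refl], clarify)
     (cases "a = 0", auto simp: mon_mult)

lemma J_coeff2: "cf (Dc (symbol p q L) * pderiv (symbol p q M)) a b =
  (\<Sum>(i,j)\<in>Tp p q L. \<Sum>(k,l)\<in>Tp p q M.
     (if i+k=Suc a \<and> j+l=Suc b then L(i,j)*M(k,l) * of_nat (i*l) else 0))"
  unfolding pderiv_symbol Dc_symbol cf_prod_sum
  by (rule sum.cong[OF refl], clarify, rule sum.cong[OF refl], clarify)
     (cases "a = 0", auto simp: mon_mult)

lemma J:
  assumes wL: "is_weyl L" and wM: "is_weyl M" and pq: "p+q>0"
    and comm: "weyl_mult L M = weyl_mult M L"
  shows "pderiv (symbol p q L) * Dc (symbol p q M) = Dc (symbol p q L) * pderiv (symbol p q M)"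
  by (rule cf_eqI) (simp only: J_coeff1 J_coeff2 comm_top[OF wL wM pq comm])




lemma pow_rule:
  fixes D :: "pp \<Rightarrow> pp"
  assumes Dm: "\<And>x y. D (x*y) = D x * y + x * D y"
  shows "g * D (g^k) = of_nat k * g^k * D g"
proof (induction k)
  case 0
  have "D 1 = D 1 + D 1" using Dm[of 1 1] by simp
  hence "D 1 = 0" by simp
  thus ?case by simp
next
  case (Suc k)
  have "g * D (g^Suc k) = g * (D g * g^k + g * D (g^k))" by (simp add: Dm)
  also have "\<dots> = g * g^k * D g + g * (g * D (g^k))" by (simp add: algebra_simps)
  also have "\<dots> = g * g^k * D g + g * (of_nat k * g^k * D g)" by (simp add: Suc)
  also have "\<dots> = of_nat (Suc k) * g^Suc k * D g" by (simp add: algebra_simps)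
  finally show ?case .
qed

lemma core:
  fixes D :: "pp \<Rightarrow> pp" and A B f g h u :: pp
  assumes Dm: "\<And>x y. D (x*y) = D x * y + x * D y"
    and E: "A*f*D h = B*h*D f" and f: "f = g^m" and h: "h = g^k * u"
    and f0: "f \<noteq> 0" and g0: "g \<noteq> 0"
  shows "A*g*D u + A*of_nat k*u*D g = B*of_nat m*u*D g"
proof -
  have gf: "g * D f = of_nat m * f * D g" unfolding f by (rule pow_rule[OF Dm])
  have gk: "g * D (g^k) = of_nat k * g^k * D g" by (rule pow_rule[OF Dm])
  have gh: "g * D h = of_nat k * g^k * D g * u + g^k * (g * D u)"
  proof -
    have "g * D h = (g * D (g^k)) * u + g^k * (g * D u)" unfolding h Dm by (simp add: algebra_simps)
    thus ?thesis unfolding gk .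
  qed
  have "A*f*(g*D h) = B*h*(g*D f)" using E by (metis mult.left_commute mult.assoc)
  hence "A*f*(of_nat k * g^k * D g * u + g^k * (g * D u)) = B*(g^k*u)*(of_nat m * f * D g)"
    unfolding gh gf by (simp add: h)
  hence "(f*g^k) * (A*g*D u + A*of_nat k*u*D g) = (f*g^k) * (B*of_nat m*u*D g)"
    by (simp add: algebra_simps)
  moreover have "f*g^k \<noteq> 0" using f0 g0 by simp
  ultimately show ?thesis using mult_left_cancel by blast
qed

lemma eul_pair:
  fixes Kp Kq A B f h :: pp
  assumes EF: "Kp*(Yp*Dc f) + Kq*(Xp*pderiv f) = A*f"
    and EH: "Kp*(Yp*Dc h) + Kq*(Xp*pderiv h) = B*h"
    and J: "pderiv f * Dc h = Dc f * pderiv h"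
  shows "A*f*Dc h = B*h*Dc f" "A*f*pderiv h = B*h*pderiv f"
proof -
  have "A*f*Dc h = (Kp*(Yp*Dc f) + Kq*(Xp*pderiv f)) * Dc h" using EF by simp
  also have "\<dots> = Kp*Yp*Dc f*Dc h + Kq*Xp*(pderiv f * Dc h)" by (simp add: algebra_simps)
  also have "\<dots> = Kp*Yp*Dc f*Dc h + Kq*Xp*(Dc f * pderiv h)" using J by simp
  also have "\<dots> = (Kp*(Yp*Dc h) + Kq*(Xp*pderiv h)) * Dc f" by (simp add: algebra_simps)
  also have "\<dots> = B*h*Dc f" using EH by simp
  finally show "A*f*Dc h = B*h*Dc f" .
  have "A*f*pderiv h = (Kp*(Yp*Dc f) + Kq*(Xp*pderiv f)) * pderiv h" using EF by simp
  also have "\<dots> = Kp*Yp*(Dc f*pderiv h) + Kq*Xp*pderiv f * pderiv h" by (simp add: algebra_simps)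
  also have "\<dots> = Kp*Yp*(pderiv f * Dc h) + Kq*Xp*pderiv f * pderiv h" using J by simp
  also have "\<dots> = (Kp*(Yp*Dc h) + Kq*(Xp*pderiv h)) * pderiv f" by (simp add: algebra_simps)
  also have "\<dots> = B*h*pderiv f" using EH by simp
  finally show "A*f*pderiv h = B*h*pderiv f" .
qed

lemma pderiv_prod: "pderiv (x*y) = pderiv x * y + x * pderiv (y::pp)"
  by (simp add: pderiv_mult algebra_simps)




lemma Kof: "K (of_nat x) = of_nat x"
  by (simp add: K_def of_nat_poly)

lemma main_pos:
  fixes L M :: weyl and g :: pp
  assumes wL: "is_weyl L" and L0n: "L (0,n) = 1" and n0: "n > 0" and q0: "q > 0"
    and dL: "delta p q L = Lam p q (0,n)"
    and wM: "is_weyl M" and comm: "weyl_mult L M = weyl_mult M L" and M0: "M \<noteq> (\<lambda>_. 0)"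
    and irr: "irreducible g" and fg: "symbol p q L = g ^ m"
  shows "\<exists>c k. c \<noteq> 0 \<and> symbol p q M = smult [:c:] (g ^ k)"
proof -
  define f where "f = symbol p q L"
  define h where "h = symbol p q M"
  define a where "a = delta p q L"
  define b where "b = delta p q M"
  have pq: "p + q > 0" using q0 by simp
  have a_pos: "a > 0" using dL q0 n0 by (simp add: a_def Lam_def)
  have cfn: "cf f 0 n = 1" unfolding f_def using sym_cf[OF wL, of p q 0 n] dL L0n by simp
  hence "coeff f n \<noteq> 0" by (auto simp: cf_def)
  hence degf: "n \<le> degree f" by (rule le_degree)
  hence f0: "f \<noteq> 0" using n0 by auto
  have h0: "h \<noteq> 0"
  proof -
    have "\<exists>ij. M ij \<noteq> 0" using M0 by (metis ext)
    then obtain ij where "M ij \<noteq> 0" by blast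
    hence ne: "newton M \<noteq> {}" unfolding newton_def by blast
    have "delta p q M \<in> Lam p q ` newton M" unfolding delta_def
      using wM ne by (intro Max_in) (auto simp: is_weyl_def)
    then obtain i j where ij: "(i,j) \<in> newton M" "Lam p q (i,j) = delta p q M" by auto
    have "cf h i j = M (i,j)" unfolding h_def using sym_cf[OF wM, of p q i j] ij by simp
    also have "\<dots> \<noteq> 0" using ij by (simp add: newton_def)
    finally show ?thesis by (auto simp: cf_def)
  qed
  have g0: "g \<noteq> 0" and gnu: "\<not> is_unit g" using irr by (auto simp: irreducible_def)
  have pg: "prime_elem g" using irr by (simp add: prime_elem_iff_irreducible)
  have m1: "m \<ge> 1"
  proof (rule ccontr)
    assume "\<not> m \<ge> 1"
    hence "m = 0" by simp
    hence "f = 1" using fg by (simp add: f_def)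
    thus False using degf n0 by simp
  qed
  obtain u k where hu: "h = g ^ multiplicity g h * u" and ndvd: "\<not> g dvd u"
    using multiplicity_decompose'[OF h0 gnu] by metis
  define k where "k = multiplicity g h"
  have hu: "h = g^k * u" using hu by (simp add: k_def)
  have EF: "K (of_nat p) * (Yp * Dc f) + K (of_nat q) * (Xp * pderiv f) = K (of_nat a) * f"
    unfolding f_def a_def by (rule euler[OF wL])
  have EH: "K (of_nat p) * (Yp * Dc h) + K (of_nat q) * (Xp * pderiv h) = K (of_nat b) * h"
    unfolding h_def b_def by (rule euler[OF wM])
  have JJ: "pderiv f * Dc h = Dc f * pderiv h"
    unfolding f_def h_def by (rule J[OF wL wM pq comm])
  note ep = eul_pair[OF EF EH JJ, unfolded Kof]
  have fgm: "f = g^m" using fg by (simp add: f_def)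
  have c1: "of_nat a*g*pderiv u + of_nat a*of_nat k*u*pderiv g = of_nat b*of_nat m*u*pderiv g"
    by (rule core[OF pderiv_prod ep(2) fgm hu f0 g0])
  have c2: "of_nat a*g*Dc u + of_nat a*of_nat k*u*Dc g = of_nat b*of_nat m*u*Dc g"
    by (rule core[OF Dc_mult ep(1) fgm hu f0 g0])
  have akbm: "a*k = b*m"
  proof (rule ccontr)
    assume ne: "a*k \<noteq> b*m"
    define X where "X = u * pderiv g"
    have c1': "of_nat (b*m) * X = of_nat (a*k) * X + g * (of_nat a * pderiv u)"
      using c1 unfolding X_def by (simp add: algebra_simps)
    obtain d W where d: "d > (0::nat)" and dW: "of_nat d * X = g * W"
    proof (cases "a*k < b*m")
      case True
      have "of_nat (b*m - a*k) * X = of_nat (b*m) * X - of_nat (a*k) * X"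
        using True by (simp add: of_nat_diff algebra_simps)
      also have "\<dots> = g * (of_nat a * pderiv u)" using c1' by simp
      finally show ?thesis using that[of "b*m - a*k" "of_nat a * pderiv u"] True by linarith
    next
      case False
      hence lt: "b*m < a*k" using ne by simp
      have "of_nat (a*k - b*m) * X = of_nat (a*k) * X - of_nat (b*m) * X"
        using lt by (simp add: of_nat_diff algebra_simps)
      also have "\<dots> = g * (- (of_nat a * pderiv u))" using c1' by simp
      finally show ?thesis using that[of "a*k - b*m" "- (of_nat a * pderiv u)"] lt by linarith
    qed
    have "g dvd smult [:of_nat d:] X" using dW by (simp add: of_nat_poly)
    hence "g dvd smult [:1 / of_nat d:] (smult [:of_nat d:] X)" by (rule dvd_smult)
    moreover have "smult [:1 / of_nat d:] (smult [:of_nat d:] X) = X" using d by (simp flip: one_pCons)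
    ultimately have "g dvd u * pderiv g" by (simp add: X_def)
    hence "g dvd pderiv g" using pg ndvd prime_elem_dvd_mult_iff by blast
    hence "degree g = 0"
    proof (cases "pderiv g = 0")
      case True thus ?thesis by (simp add: pderiv_eq_0_iff)
    next
      case False
      assume "g dvd pderiv g"
      hence "degree g \<le> degree (pderiv g)" using False by (rule dvd_imp_degree_le)
      thus ?thesis by (simp add: degree_pderiv)
    qed
    hence "degree f = 0" using fgm g0 by (simp add: degree_power_eq)
    thus False using degf n0 by simp
  qed
  have ak: "of_nat a * of_nat k = (of_nat b * of_nat m :: pp)"
    by (metis akbm of_nat_mult)
  have aa: "of_nat a \<noteq> (0::pp)" using a_pos by simp
  have "of_nat a * g * pderiv u = 0" using c1 ak by (simp add: algebra_simps)
  hence pu: "pderiv u = 0" using aa g0 by simp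
  have "of_nat a * g * Dc u = 0" using c2 ak by (simp add: algebra_simps)
  hence du: "Dc u = 0" using aa g0 by simp
  have "degree u = 0" using pu by (simp add: pderiv_eq_0_iff)
  hence u1: "u = [:coeff u 0:]" by (metis degree_0_id)
  have "pderiv (coeff u 0) = 0" using du by (metis Dc_coeff coeff_0)
  hence "degree (coeff u 0) = 0" by (simp add: pderiv_eq_0_iff)
  hence u2: "coeff u 0 = [:coeff (coeff u 0) 0:]" by (metis degree_0_id)
  define c where "c = coeff (coeff u 0) 0"
  have uc: "u = [:[:c:]:]" using u1 u2 by (simp add: c_def)
  have "h = smult [:c:] (g^k)" using hu uc by simp
  moreover have "c \<noteq> 0" using h0 hu uc by auto
  ultimately show ?thesis unfolding h_def by blast
qed




definition lift :: "complex poly \<Rightarrow> pp" where "lift x = map_poly (\<lambda>c. [:c:]) x"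

lemma coeff_lift[simp]: "coeff (lift x) n = [:coeff x n:]"
  unfolding lift_def by (simp add: coeff_map_poly)

lemma const_sum: "[:sum f A:] = (\<Sum>x\<in>A. [:f x:])"
proof (induct A rule: infinite_finite_induct)
  case (insert x F)
  have "[:f x + sum f F:] = [:f x:] + [:sum f F:]" by (simp add: add_pCons)
  thus ?case using insert by simp
qed simp_all

lemma lift_mult: "lift (a*b) = lift a * lift b"
  by (rule poly_eqI) (simp add: coeff_mult const_sum mult.commute)

lemma degree_lift: "degree (lift x) = degree x"
  unfolding lift_def by (rule degree_map_poly) simp

lemma cf_Dc: "cf (Dc F) i j = of_nat (Suc i) * cf F (Suc i) j"
  by (simp add: cf_def Dc_coeff coeff_pderiv)

lemma cf_pderiv0: "cf (pderiv F) 0 j = of_nat (Suc j) * cf F 0 (Suc j)"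
  by (simp add: cf_def coeff_pderiv of_nat_poly)

lemma cf_R: "cf ([:[:-z:], 1:] * F) 0 j = - z * cf F 0 j + (if j = 0 then 0 else cf F 0 (j - 1))"
  by (cases j) (simp_all add: cf_def)

lemma cf_smult_nat: "cf (smult (of_nat m) F) 0 j = of_nat m * cf F 0 j"
  by (simp add: cf_def of_nat_poly)

lemma noq:
  fixes L :: weyl and g :: pp
  assumes wL: "is_weyl L" and L0n: "L (0,n) = 1" and n0: "n > 0"
    and Lnn1: "L (0, n - 1) = 0" and Lsn: "L (0, Suc n) = 0"
    and b: "L (0,b) \<noteq> 0" "b \<noteq> n"
    and p0: "p > 0" and dL: "delta p 0 L = 0"
    and irr: "irreducible g" and fg: "symbol p 0 L = g ^ m"
  shows False
proof -
  define f where "f = symbol p 0 L"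
  have cf0: "cf f i j = (if i = 0 then L (i,j) else 0)" for i j
  proof -
    have "cf f i j = (if p * i = 0 then L(i,j) else 0)"
      unfolding f_def sym_cf[OF wL] dL by (simp add: Lam_def)
    thus ?thesis using p0 by simp
  qed
  have "coeff f n \<noteq> 0" using cf0[of 0 n] L0n by (auto simp: cf_def)
  hence degf: "n \<le> degree f" by (rule le_degree)
  have g0: "g \<noteq> 0" using irr by (auto simp: irreducible_def)
  have fgm: "f = g^m" using fg by (simp add: f_def)
  have m1: "m \<ge> 1"
  proof (rule ccontr)
    assume "\<not> m \<ge> 1"
    hence "m = 0" by simp
    hence "f = 1" using fgm by simp
    thus False using degf n0 by simp
  qed
  have Dcf: "Dc f = 0"
  proof (rule cf_eqI)
    fix i j show "cf (Dc f) i j = cf 0 i j" unfolding cf_Dc cf0 by (simp add: cf_def)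
  qed
  have "g * Dc (g^m) = of_nat m * g^m * Dc g" by (rule pow_rule[OF Dc_mult])
  hence "of_nat m * g^m * Dc g = 0" using Dcf fgm by simp
  moreover have "of_nat m \<noteq> (0::pp)" using m1 by simp
  ultimately have Dcg: "Dc g = 0" using g0 by simp
  define g0 where "g0 = map_poly (\<lambda>c. coeff c 0) g"
  have glift: "g = lift g0"
  proof (rule poly_eqI)
    fix j
    have "pderiv (coeff g j) = 0" using Dcg by (metis Dc_coeff coeff_0)
    hence "degree (coeff g j) = 0" by (simp add: pderiv_eq_0_iff)
    hence "coeff g j = [:coeff (coeff g j) 0:]" by (metis degree_0_id)
    thus "coeff g j = coeff (lift g0) j" by (simp add: g0_def coeff_map_poly)
  qed
  have "degree g0 \<noteq> 0"
  proof
    assume "degree g0 = 0"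
    hence "degree g = 0" using glift degree_lift by simp
    hence "degree f = 0" using fgm by (simp add: degree_power_eq g0)
    thus False using degf n0 by simp
  qed
  hence "\<not> constant (poly g0)" by (simp add: constant_degree)
  then obtain z where "poly g0 z = 0" using fundamental_theorem_of_algebra by blast
  hence "[:-z, 1:] dvd g0" by (simp add: poly_eq_0_iff_dvd)
  then obtain s0 where s0: "g0 = [:-z, 1:] * s0" by (auto elim: dvdE)
  define R :: pp where "R = [:[:-z:], 1:]"
  have lR: "lift [:-z, 1:] = R" unfolding R_def by (rule poly_eqI) (simp add: coeff_pCons split: nat.split)
  have gRS: "g = R * lift s0" unfolding glift s0 lift_mult lR ..
  have "\<not> is_unit R"
  proof
    assume "is_unit R"
    then obtain c where "R = [:c:]" using is_unit_poly_iff by blast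
    thus False unfolding R_def by simp
  qed
  hence "is_unit (lift s0)" using irreducibleD[OF irr gRS] by blast
  then obtain c where cS: "lift s0 = [:c:]" using is_unit_poly_iff by blast
  have pg: "pderiv g = [:c:]" unfolding gRS cS R_def by (simp add: pderiv_mult pderiv_pCons)
  have Rpg: "R * pderiv g = g" using pg gRS cS by simp
  have "R * pderiv f = smult (of_nat m) (g^(m-1) * (R * pderiv g))"
    unfolding fgm pderiv_power by (simp add: algebra_simps)
  also have "\<dots> = smult (of_nat m) f" unfolding Rpg fgm using m1
    by (simp add: power_eq_if[of g m] mult.commute)
  finally have eqR: "R * pderiv f = smult (of_nat m) f" .
  define cc where "cc j = L (0,j)" for j
  have eqn: "- z * (of_nat (Suc j) * cc (Suc j)) + of_nat j * cc j = of_nat m * cc j" for j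
  proof -
    have "cf (R * pderiv f) 0 j = cf (smult (of_nat m) f) 0 j" using eqR by simp
    hence "- z * cf (pderiv f) 0 j + (if j = 0 then 0 else cf (pderiv f) 0 (j - 1)) = of_nat m * cf f 0 j"
      unfolding R_def cf_R cf_smult_nat .
    moreover have "(if j = 0 then 0 else cf (pderiv f) 0 (j - 1)) = of_nat j * cf f 0 j"
      by (cases j) (simp_all add: cf_pderiv0)
    ultimately show ?thesis by (simp add: cf_pderiv0 cf0 cc_def)
  qed
  have mn: "of_nat m = (of_nat n :: complex)"
    using eqn[of n] L0n Lsn by (simp add: cc_def)
  have "z = 0"
    using eqn[of "n - 1"] L0n Lnn1 n0 by (simp add: cc_def)
  hence "of_nat b * cc b = of_nat n * cc b" using eqn[of b] mn by simp
  hence "b = n" using b by (simp add: cc_def)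
  thus False using b by simp
qed


theorem mainTheorem5:
  fixes L :: weyl and n p q :: nat and g :: "complex poly poly"
  assumes "n > 0"
    and "normal_form n L"
    and "L \<noteq> dpow n"
    and "test_filtration n L p q"
    and "irreducible g"
    and "\<exists>m. symbol p q L = g ^ m"
  shows "\<forall>M \<in> centralizer L. M \<noteq> (\<lambda>_. 0) \<longrightarrow>
           (\<exists>c k. c \<noteq> 0 \<and> symbol p q M = smult [:c:] (g ^ k))"
proof (intro ballI impI)
  fix M assume MC: "M \<in> centralizer L" and M0: "M \<noteq> (\<lambda>_. 0)"
  have wM: "is_weyl M" and comm: "weyl_mult L M = weyl_mult M L" using MC by (auto simp: centralizer_def)
  have wL: "is_weyl L" and L0n: "L (0,n) = 1"
    and nf: "\<And>i j. (j > n \<or> (j = n \<and> i > 0) \<or> Suc j = n) \<Longrightarrow> L (i, j) = 0"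
    using assms(2) by (auto simp: normal_form_def)
  have pq: "p + q > 0" and dL: "delta p q L = Lam p q (0,n)"
    and ex: "\<exists>ab \<in> newton L - {(0, n)}. Lam p q ab = delta p q L"
    using assms(4) by (auto simp: test_filtration_def)
  obtain m where fg: "symbol p q L = g ^ m" using assms(6) by blast
  show "\<exists>c k. c \<noteq> 0 \<and> symbol p q M = smult [:c:] (g ^ k)"
  proof (cases "q > 0")
    case True
    show ?thesis by (rule main_pos[OF wL L0n assms(1) True dL wM comm M0 assms(5) fg])
  next
    case False
    hence q0: "q = 0" by simp
    hence p0: "p > 0" using pq by simp
    obtain ab where ab0: "ab \<in> newton L - {(0, n)}" "Lam p q ab = delta p q L"
      using ex by blast
    obtain a b where abe: "ab = (a,b)" by (cases ab)
    have ab: "(a,b) \<in> newton L" "(a,b) \<noteq> (0,n)" "Lam p q (a,b) = delta p q L"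
      using ab0 abe by auto
    have d0: "delta p 0 L = 0" using dL q0 by (simp add: Lam_def)
    have "a = 0" using ab(3) d0 q0 p0 by (simp add: Lam_def)
    hence Lb: "L (0,b) \<noteq> 0" "b \<noteq> n" using ab by (auto simp: newton_def)
    have "L (0, n - 1) = 0" using nf[of "n - 1" 0] assms(1) by simp
    moreover have "L (0, Suc n) = 0" using nf[of "Suc n" 0] by simp
    moreover have "symbol p 0 L = g ^ m" using fg q0 by simp
    ultimately have False
      using noq[OF wL L0n assms(1) _ _ Lb p0 d0 assms(5)] by blast
    thus ?thesis ..
  qed
qed

end
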